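(* Let $d,d'\in\mathcal D$ be two deterministic stationary policies, and write $(\mathbf P,\mathbf r,\boldsymbol\pi,J_\mu,J_{\mu,\sigma},\mathbf g)$ for the quantities $(\mathbf P^d,\mathbf r^d,\boldsymbol\pi^d,J^d_\mu,J^d_{\mu,\sigma},\mathbf g^d)$ of $d$ and $(\mathbf P',\mathbf r',\boldsymbol\pi',J'_\mu,J'_{\mu,\sigma})$ for those of $d'$. Then $$J'_{\mu,\sigma}-J_{\mu,\sigma}=\boldsymbol\pi'\Big[(\mathbf P'-\mathbf P)\mathbf g+\mathbf r'-\beta(\mathbf r'-J_\mu\mathbf 1)^2_\odot-\mathbf r+\beta(\mathbf r-J_\mu\mathbf 1)^2_\odot\Big]+\beta\,(J'_\mu-J_\mu)^2 .$$
   Context: Let $\mathcal S=\{1,\dots,S\}$ be a finite state space and $\mathcal A$ a finite action set. For $i,j\in\mathcal S$, $a\in\mathcal A$, let $p^a(i,j)\ge 0$ with $\sum_{j}p^a(i,j)=1$ be transition probabilities and $r(i,a)\in\mathbb R$ rewards. A deterministic stationary policy is a map $d:\mathcal S\to\mathcal A$; $\mathcal D$ denotes the (finite) set of such policies. Under $d$, $\mathbf P^d$ is the $S\times S$ matrix with entries $p^{d(i)}(i,j)$ and $\mathbf r^d$ is the column vector with entries $r(i,d(i))$. Standing assumption: for every $d\in\mathcal D$ the Markov chain with transition matrix $\mathbf P^d$ is irreducible, so it has a unique stationary distribution, the row vector $\boldsymbol\pi^d$ with $\boldsymbol\pi^d\mathbf P^d=\boldsymbol\pi^d$, $\boldsymbol\pi^d\mathbf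 1=1$, all of whose entries are strictly positive ($\mathbf 1$ is the all-ones column vector). Define the long-run mean $J^d_\mu=\boldsymbol\pi^d\mathbf r^d$, the steady-state variance $J^d_\sigma=\sum_i\pi^d(i)(r(i,d(i))-J^d_\mu)^2$, and, for a fixed weight $\beta>0$, the mean-variance combined metric $J^d_{\mu,\sigma}=J^d_\mu-\beta J^d_\sigma=\boldsymbol\pi^d\mathbf f^d$, where $f^d(i)=r(i,d(i))-\beta(r(i,d(i))-J^d_\mu)^2$. The performance potential $\mathbf g^d$ is any column vector solving the Poisson equation $\mathbf g^d=\mathbf f^d-J^d_{\mu,\sigma}\mathbf 1+\mathbf P^d\mathbf g^d$ (solutions exist and are unique up to adding a constant multiple of $\mathbf 1$). For a vector $\mathbf v$, $(\mathbf v)^2_\odot$ denotes its componentwise square. *)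

theory Defs
  imports Complex_Main
begin

text \<open>Transition kernel p i a j = p^a(i,j); rewards r i a = r(i,a).
  A deterministic stationary policy is d :: 's \<Rightarrow> 'a.\<close>

definition Pmat :: "('s \<Rightarrow> 'a \<Rightarrow> 's \<Rightarrow> real) \<Rightarrow> ('s \<Rightarrow> 'a) \<Rightarrow> 's \<Rightarrow> 's \<Rightarrow> real" where
  "Pmat p d i j = p i (d i) j"

definition rvec :: "('s \<Rightarrow> 'a \<Rightarrow> real) \<Rightarrow> ('s \<Rightarrow> 'a) \<Rightarrow> 's \<Rightarrow> real" where
  "rvec r d i = r i (d i)"

fun mpow :: "('s::finite \<Rightarrow> 's \<Rightarrow> real) \<Rightarrow> nat \<Rightarrow> 's \<Rightarrow> 's \<Rightarrow> real" where
  "mpow P 0 = (\<lambda>i j. if i = j then 1 else 0)"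
| "mpow P (Suc n) = (\<lambda>i j. \<Sum>k\<in>UNIV. mpow P n i k * P k j)"

definition mc_irreducible :: "('s::finite \<Rightarrow> 's \<Rightarrow> real) \<Rightarrow> bool" where
  "mc_irreducible P \<longleftrightarrow> (\<forall>i j. \<exists>n. mpow P n i j > 0)"

text \<open>The (unique, under irreducibility) stationary distribution: pi P = pi, pi 1 = 1.\<close>
definition stat_dist :: "('s::finite \<Rightarrow> 's \<Rightarrow> real) \<Rightarrow> 's \<Rightarrow> real" where
  "stat_dist P = (THE \<pi>. (\<forall>j. (\<Sum>i\<in>UNIV. \<pi> i * P i j) = \<pi> j) \<and> (\<Sum>i\<in>UNIV. \<pi> i) = 1)"

definition J_mu :: "('s::finite \<Rightarrow> 'a \<Rightarrow> 's \<Rightarrow> real) \<Rightarrow> ('s \<Rightarrow> 'a \<Rightarrow> real) \<Rightarrow> ('s \<Rightarrow> 'a) \<Rightarrow> real" where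
  "J_mu p r d = (\<Sum>i\<in>UNIV. stat_dist (Pmat p d) i * rvec r d i)"

definition J_sigma :: "('s::finite \<Rightarrow> 'a \<Rightarrow> 's \<Rightarrow> real) \<Rightarrow> ('s \<Rightarrow> 'a \<Rightarrow> real) \<Rightarrow> ('s \<Rightarrow> 'a) \<Rightarrow> real" where
  "J_sigma p r d = (\<Sum>i\<in>UNIV. stat_dist (Pmat p d) i * (rvec r d i - J_mu p r d)^2)"

definition J_ms :: "real \<Rightarrow> ('s::finite \<Rightarrow> 'a \<Rightarrow> 's \<Rightarrow> real) \<Rightarrow> ('s \<Rightarrow> 'a \<Rightarrow> real) \<Rightarrow> ('s \<Rightarrow> 'a) \<Rightarrow> real" where
  "J_ms \<beta> p r d = J_mu p r d - \<beta> * J_sigma p r d"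

definition f_ms :: "real \<Rightarrow> ('s::finite \<Rightarrow> 'a \<Rightarrow> 's \<Rightarrow> real) \<Rightarrow> ('s \<Rightarrow> 'a \<Rightarrow> real) \<Rightarrow> ('s \<Rightarrow> 'a) \<Rightarrow> 's \<Rightarrow> real" where
  "f_ms \<beta> p r d i = rvec r d i - \<beta> * (rvec r d i - J_mu p r d)^2"

definition is_potential :: "real \<Rightarrow> ('s::finite \<Rightarrow> 'a \<Rightarrow> 's \<Rightarrow> real) \<Rightarrow> ('s \<Rightarrow> 'a \<Rightarrow> real) \<Rightarrow> ('s \<Rightarrow> 'a) \<Rightarrow> ('s \<Rightarrow> real) \<Rightarrow> bool" where
  "is_potential \<beta> p r d g \<longleftrightarrow>
     (\<forall>i. g i = f_ms \<beta> p r d i - J_ms \<beta> p r d + (\<Sum>j\<in>UNIV. Pmat p d i j * g j))"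

end

theory Submission imports Defs "HOL-Analysis.Analysis" begin
lemma exists_stat:
  fixes P :: "'s::finite \<Rightarrow> 's \<Rightarrow> real"
  assumes nn: "\<And>i j. P i j \<ge> 0" and st: "\<And>i. (\<Sum>j\<in>UNIV. P i j) = 1"
  shows "\<exists>\<pi>. (\<forall>j. (\<Sum>i\<in>UNIV. \<pi> i * P i j) = \<pi> j) \<and> (\<Sum>i\<in>UNIV. \<pi> i) = 1"
proof -
  define f where "f = (\<lambda>x::real^'s. \<chi> i. (\<Sum>j\<in>UNIV. P i j * x$j) - x$i)"
  have lin: "linear f"
  proof (rule linearI)
    fix x y :: "real^'s" and c :: real
    show "f (x + y) = f x + f y"
      by (simp add: f_def vec_eq_iff distrib_left sum.distrib)
    show "f (c *\<^sub>R x) = c *\<^sub>R f x"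
      by (simp add: f_def vec_eq_iff sum_distrib_left right_diff_distrib mult.left_commute)
  qed
  define one :: "real^'s" where "one = (\<chi> i. 1)"
  have notin: "one \<notin> range f"
  proof
    assume "one \<in> range f"
    then obtain x where x: "one = f x" by auto
    have "Max (range (\<lambda>j. x$j)) \<in> range (\<lambda>j. x$j)" by (rule Max_in) auto
    then obtain i where i: "x$i = Max (range (\<lambda>j. x$j))" by (metis rangeE)
    have le: "x$j \<le> x$i" for j unfolding i by (rule Max_ge) auto
    have "(\<Sum>j\<in>UNIV. P i j * x$j) \<le> (\<Sum>j\<in>UNIV. P i j * x$i)"
      by (rule sum_mono) (simp add: le mult_left_mono nn)
    also have "\<dots> = x$i" using st[of i] by (simp add: sum_distrib_right[symmetric])
    finally have "(\<Sum>j\<in>UNIV. P i j * x$j) \<le> x$i" .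
    moreover have "one$i = (\<Sum>j\<in>UNIV. P i j * x$j) - x$i" using x by (simp add: f_def)
    ultimately show False by (simp add: one_def)
  qed
  have sp: "span (range f) = range f"
    using lin by (simp add: span_eq_iff linear_subspace_image)
  obtain y z where y: "y \<in> span (range f)" and orth: "\<And>w. w \<in> span (range f) \<Longrightarrow> orthogonal z w"
     and dec: "one = y + z"
    by (rule orthogonal_subspace_decomp_exists[of "range f" one]) blast
  have "z \<noteq> 0"
  proof
    assume "z = 0"
    then have "one = y" using dec by simp
    then show False using notin y sp by simp
  qed
  have "z \<bullet> one = z \<bullet> z" using orth[OF y] dec by (simp add: orthogonal_def inner_add_right)
  then have pos: "z \<bullet> one > 0" using \<open>z \<noteq> 0\<close> by simp
  have zs: "z \<bullet> one = (\<Sum>i\<in>UNIV. z$i)" by (simp add: inner_vec_def one_def)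
  have stz: "(\<Sum>i\<in>UNIV. z$i * P i j) = z$j" for j
  proof -
    have "orthogonal z (f (axis j 1))" using orth sp by auto
    moreover have "f (axis j 1) $ i = P i j - (if i = j then 1 else 0)" for i
      by (simp add: f_def axis_def if_distrib cong: if_cong)
    ultimately have "(\<Sum>i\<in>UNIV. z$i * (P i j - (if i = j then 1 else 0))) = 0"
      by (simp add: orthogonal_def inner_vec_def)
    then have "(\<Sum>i\<in>UNIV. z$i * P i j) - (\<Sum>i\<in>UNIV. z$i * (if i = j then 1 else 0)) = 0"
      by (simp add: right_diff_distrib sum_subtractf)
    then show ?thesis by (simp add: if_distrib cong: if_cong)
  qed
  define \<pi> where "\<pi> i = z$i / (\<Sum>i\<in>UNIV. z$i)" for i
  have "(\<Sum>i\<in>UNIV. \<pi> i * P i j) = \<pi> j" for j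
    using stz[of j] by (simp add: \<pi>_def sum_divide_distrib[symmetric])
  moreover have "(\<Sum>i\<in>UNIV. \<pi> i) = 1"
    using pos zs by (simp add: \<pi>_def sum_divide_distrib[symmetric])
  ultimately show ?thesis by blast
qed
lemma stat_pow:
  fixes P :: "'s::finite \<Rightarrow> 's \<Rightarrow> real"
  assumes "\<And>j. (\<Sum>i\<in>UNIV. \<mu> i * P i j) = \<mu> j"
  shows "(\<Sum>i\<in>UNIV. \<mu> i * mpow P n i j) = \<mu> j"
proof (induction n arbitrary: j)
  case 0 then show ?case by (simp add: if_distrib cong: if_cong)
next
  case (Suc n)
  have "(\<Sum>i\<in>UNIV. \<mu> i * mpow P (Suc n) i j) = (\<Sum>k\<in>UNIV. (\<Sum>i\<in>UNIV. \<mu> i * mpow P n i k) * P k j)"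
    by (simp add: sum_distrib_left sum_distrib_right mult.assoc) (rule sum.swap)
  also have "\<dots> = \<mu> j" using Suc assms by simp
  finally show ?case .
qed

lemma stat_zero:
  fixes P :: "'s::finite \<Rightarrow> 's \<Rightarrow> real"
  assumes irr: "mc_irreducible P" and nn: "\<And>i j. P i j \<ge> 0"
    and st: "\<And>j. (\<Sum>i\<in>UNIV. \<mu> i * P i j) = \<mu> j"
    and mn: "\<And>i. \<mu> i \<ge> 0" and z: "\<mu> j = 0"
  shows "\<mu> i = 0"
proof -
  obtain n where n: "mpow P n i j > 0" using irr by (auto simp: mc_irreducible_def)
  have mnn: "\<And>n a b. mpow P n a b \<ge> 0"
  proof -
    fix n a b show "mpow P n a b \<ge> 0"
      by (induction n arbitrary: b) (auto intro!: sum_nonneg mult_nonneg_nonneg nn)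
  qed
  have "\<mu> i * mpow P n i j \<le> (\<Sum>k\<in>UNIV. \<mu> k * mpow P n k j)"
    by (rule member_le_sum) (auto intro: mult_nonneg_nonneg mn mnn)
  also have "\<dots> = 0" using stat_pow[of \<mu> P, OF st] z by simp
  finally have "\<mu> i * mpow P n i j \<le> 0" .
  then have "\<mu> i \<le> 0" using n by (simp add: mult_le_0_iff)
  then show ?thesis using mn[of i] by simp
qed

lemma stat_unique:
  fixes P :: "'s::finite \<Rightarrow> 's \<Rightarrow> real"
  assumes irr: "mc_irreducible P" and nn: "\<And>i j. P i j \<ge> 0"
    and stoch: "\<And>i. (\<Sum>j\<in>UNIV. P i j) = 1"
    and st: "\<And>j. (\<Sum>i\<in>UNIV. \<delta> i * P i j) = \<delta> j"
    and s0: "(\<Sum>i\<in>UNIV. \<delta> i) = 0"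
  shows "\<delta> = (\<lambda>_. 0)"
proof -
  have le: "\<bar>\<delta> j\<bar> \<le> (\<Sum>i\<in>UNIV. \<bar>\<delta> i\<bar> * P i j)" for j
  proof -
    have "\<bar>\<delta> j\<bar> = \<bar>\<Sum>i\<in>UNIV. \<delta> i * P i j\<bar>" using st by simp
    also have "\<dots> \<le> (\<Sum>i\<in>UNIV. \<bar>\<delta> i * P i j\<bar>)" by (rule sum_abs)
    also have "\<dots> = (\<Sum>i\<in>UNIV. \<bar>\<delta> i\<bar> * P i j)" using nn by (simp add: abs_mult)
    finally show ?thesis .
  qed
  have tot: "(\<Sum>j\<in>UNIV. (\<Sum>i\<in>UNIV. \<bar>\<delta> i\<bar> * P i j)) = (\<Sum>j\<in>UNIV. \<bar>\<delta> j\<bar>)"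
    by (subst sum.swap) (simp add: sum_distrib_left[symmetric] stoch)
  have absst: "(\<Sum>i\<in>UNIV. \<bar>\<delta> i\<bar> * P i j) = \<bar>\<delta> j\<bar>" for j
  proof -
    have "(\<Sum>j\<in>UNIV. (\<Sum>i\<in>UNIV. \<bar>\<delta> i\<bar> * P i j) - \<bar>\<delta> j\<bar>) = 0"
      using tot by (simp add: sum_subtractf)
    then have "\<forall>j\<in>UNIV. (\<Sum>i\<in>UNIV. \<bar>\<delta> i\<bar> * P i j) - \<bar>\<delta> j\<bar> = 0"
      by (subst (asm) sum_nonneg_eq_0_iff) (auto simp: le)
    then show ?thesis by (simp add: if_distrib cong: if_cong)
  qed
  define pp where "pp i = (\<bar>\<delta> i\<bar> + \<delta> i) / 2" for i
  define nm where "nm i = (\<bar>\<delta> i\<bar> - \<delta> i) / 2" for i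
  have stp: "(\<Sum>i\<in>UNIV. pp i * P i j) = pp j" for j
    using absst[of j] st[of j] by (simp add: pp_def sum_divide_distrib[symmetric] distrib_right sum.distrib)
  have stn: "(\<Sum>i\<in>UNIV. nm i * P i j) = nm j" for j
    using absst[of j] st[of j] by (simp add: nm_def sum_divide_distrib[symmetric] left_diff_distrib sum_subtractf)
  obtain j0 :: 's where True by simp
  show ?thesis
  proof (cases "\<delta> j0 \<ge> 0")
    case True
    then have "nm j0 = 0" by (simp add: nm_def)
    moreover have "\<And>i. nm i \<ge> 0" by (simp add: nm_def)
    ultimately have "\<And>i. nm i = 0" using stat_zero[OF irr nn stn] by blast
    then have "\<bar>\<delta> i\<bar> = \<delta> i" for i unfolding nm_def by (metis eq_iff_diff_eq_0 field_sum_of_halves div_0)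
    then have ge: "\<And>i. \<delta> i \<ge> 0" by (metis abs_ge_zero)
    then have "\<forall>i\<in>UNIV. \<delta> i = 0" using s0 by (subst sum_nonneg_eq_0_iff[symmetric]) auto
    then show ?thesis by auto
  next
    case False
    then have "pp j0 = 0" by (simp add: pp_def)
    moreover have "\<And>i. pp i \<ge> 0" by (simp add: pp_def)
    ultimately have "\<And>i. pp i = 0" using stat_zero[OF irr nn stp] by blast
    then have "\<bar>\<delta> i\<bar> = - \<delta> i" for i unfolding pp_def by (metis add_eq_0_iff2 field_sum_of_halves div_0)
    then have ge: "\<And>i. - \<delta> i \<ge> 0" by (metis abs_ge_zero)
    then have "\<forall>i\<in>UNIV. - \<delta> i = 0" using s0 by (subst sum_nonneg_eq_0_iff[symmetric]) (auto simp: sum_negf)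
    then show ?thesis by auto
  qed
qed
lemma stat_dist_props:
  fixes P :: "'s::finite \<Rightarrow> 's \<Rightarrow> real"
  assumes irr: "mc_irreducible P" and nn: "\<And>i j. P i j \<ge> 0"
    and stoch: "\<And>i. (\<Sum>j\<in>UNIV. P i j) = 1"
  shows "(\<forall>j. (\<Sum>i\<in>UNIV. stat_dist P i * P i j) = stat_dist P j) \<and> (\<Sum>i\<in>UNIV. stat_dist P i) = 1"
proof -
  obtain \<pi> where pi: "(\<forall>j. (\<Sum>i\<in>UNIV. \<pi> i * P i j) = \<pi> j) \<and> (\<Sum>i\<in>UNIV. \<pi> i) = 1"
    using exists_stat[of P, OF nn stoch] by blast
  have uq: "\<sigma> = \<pi>" if s: "(\<forall>j. (\<Sum>i\<in>UNIV. \<sigma> i * P i j) = \<sigma> j) \<and> (\<Sum>i\<in>UNIV. \<sigma> i) = 1" for \<sigma>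
  proof -
    have "(\<lambda>i. \<sigma> i - \<pi> i) = (\<lambda>_. 0)"
      by (rule stat_unique[OF irr nn stoch]) (use s pi in \<open>auto simp: left_diff_distrib sum_subtractf\<close>)
    then show ?thesis by (auto simp: fun_eq_iff dest: fun_cong)
  qed
  have "stat_dist P = \<pi>" unfolding stat_dist_def
  proof (rule the_equality)
    show "(\<forall>j. (\<Sum>i\<in>UNIV. \<pi> i * P i j) = \<pi> j) \<and> (\<Sum>i\<in>UNIV. \<pi> i) = 1" by (rule pi)
  next
    fix \<sigma> assume "(\<forall>j. (\<Sum>i\<in>UNIV. \<sigma> i * P i j) = \<sigma> j) \<and> (\<Sum>i\<in>UNIV. \<sigma> i) = 1"
    then show "\<sigma> = \<pi>" by (rule uq)
  qed
  then show ?thesis using pi by simp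
qed

theorem lemma1:
  fixes p :: "'s::finite \<Rightarrow> 'a::finite \<Rightarrow> 's \<Rightarrow> real"
    and r :: "'s \<Rightarrow> 'a \<Rightarrow> real"
    and \<beta> :: real
    and d d' :: "'s \<Rightarrow> 'a"
    and g :: "'s \<Rightarrow> real"
  assumes p_nonneg: "\<And>i a j. p i a j \<ge> 0"
    and p_stoch: "\<And>i a. (\<Sum>j\<in>UNIV. p i a j) = 1"
    and irred: "\<And>e :: 's \<Rightarrow> 'a. mc_irreducible (Pmat p e)"
    and beta_pos: "\<beta> > 0"
    and pot: "is_potential \<beta> p r d g"
  shows "J_ms \<beta> p r d' - J_ms \<beta> p r d =
     (\<Sum>i\<in>UNIV. stat_dist (Pmat p d') i *
        ((\<Sum>j\<in>UNIV. (Pmat p d' i j - Pmat p d i j) * g j)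
         + rvec r d' i - \<beta> * (rvec r d' i - J_mu p r d)^2
         - rvec r d i + \<beta> * (rvec r d i - J_mu p r d)^2))
     + \<beta> * (J_mu p r d' - J_mu p r d)^2"
proof -
  define q where "q = stat_dist (Pmat p d')"
  define P where "P = Pmat p d"
  define P' where "P' = Pmat p d'"
  define m where "m = J_mu p r d"
  define J where "J = J_ms \<beta> p r d"
  define a where "a = rvec r d'"
  define b where "b = rvec r d"
  have qp: "(\<forall>j. (\<Sum>i\<in>UNIV. q i * P' i j) = q j) \<and> (\<Sum>i\<in>UNIV. q i) = 1"
    unfolding q_def P'_def
    by (rule stat_dist_props[OF irred]) (auto simp: Pmat_def p_nonneg p_stoch)
  then have qst: "\<And>j. (\<Sum>i\<in>UNIV. q i * P' i j) = q j" and q1: "(\<Sum>i\<in>UNIV. q i) = 1" by auto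
  have gp: "\<And>i. (\<Sum>j\<in>UNIV. P i j * g j) = g i - (b i - \<beta> * (b i - m)^2) + J"
  proof -
    fix i
    have "g i = f_ms \<beta> p r d i - J_ms \<beta> p r d + (\<Sum>j\<in>UNIV. Pmat p d i j * g j)"
      using pot unfolding is_potential_def by blast
    moreover have "f_ms \<beta> p r d i = b i - \<beta> * (b i - m)^2"
      by (simp only: f_ms_def b_def m_def)
    ultimately show "(\<Sum>j\<in>UNIV. P i j * g j) = g i - (b i - \<beta> * (b i - m)^2) + J"
      unfolding P_def J_def by linarith
  qed
  have m': "J_mu p r d' = (\<Sum>i\<in>UNIV. q i * a i)"
    by (simp add: J_mu_def q_def a_def)
  define m1 where "m1 = (\<Sum>i\<in>UNIV. q i * a i)"
  have Jd': "J_ms \<beta> p r d' = m1 - \<beta> * (\<Sum>i\<in>UNIV. q i * (a i - m1)^2)"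
    by (simp add: J_ms_def J_sigma_def m' m1_def q_def a_def)
  have t1: "(\<Sum>i\<in>UNIV. q i * (\<Sum>j\<in>UNIV. P' i j * g j)) = (\<Sum>j\<in>UNIV. q j * g j)"
  proof -
    have "(\<Sum>i\<in>UNIV. q i * (\<Sum>j\<in>UNIV. P' i j * g j)) = (\<Sum>j\<in>UNIV. (\<Sum>i\<in>UNIV. q i * P' i j) * g j)"
      by (simp add: sum_distrib_left sum_distrib_right mult.assoc) (rule sum.swap)
    then show ?thesis by (simp add: qst)
  qed
  have t2: "(\<Sum>i\<in>UNIV. q i * (\<Sum>j\<in>UNIV. P i j * g j)) =
      (\<Sum>i\<in>UNIV. q i * g i) - (\<Sum>i\<in>UNIV. q i * (b i - \<beta> * (b i - m)^2)) + J"
  proof -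
    have "(\<Sum>i\<in>UNIV. q i * (\<Sum>j\<in>UNIV. P i j * g j)) =
        (\<Sum>i\<in>UNIV. q i * g i - q i * (b i - \<beta> * (b i - m)^2) + J * q i)"
      by (rule sum.cong) (simp_all add: gp ring_distribs)
    also have "\<dots> = (\<Sum>i\<in>UNIV. q i * g i) - (\<Sum>i\<in>UNIV. q i * (b i - \<beta> * (b i - m)^2)) + J * (\<Sum>i\<in>UNIV. q i)"
      by (simp only: sum.distrib sum_subtractf sum_distrib_left)
    finally show ?thesis by (simp add: q1)
  qed
  have split: "(\<Sum>i\<in>UNIV. q i * ((\<Sum>j\<in>UNIV. (P' i j - P i j) * g j)
         + a i - \<beta> * (a i - m)^2 - b i + \<beta> * (b i - m)^2))
     = (\<Sum>i\<in>UNIV. q i * (\<Sum>j\<in>UNIV. P' i j * g j)) - (\<Sum>i\<in>UNIV. q i * (\<Sum>j\<in>UNIV. P i j * g j))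
       + (\<Sum>i\<in>UNIV. q i * a i) - \<beta> * (\<Sum>i\<in>UNIV. q i * (a i - m)^2)
       - (\<Sum>i\<in>UNIV. q i * (b i - \<beta> * (b i - m)^2))"
  proof -
    have pw: "q i * ((\<Sum>j\<in>UNIV. (P' i j - P i j) * g j)
         + a i - \<beta> * (a i - m)^2 - b i + \<beta> * (b i - m)^2)
       = q i * (\<Sum>j\<in>UNIV. P' i j * g j) - q i * (\<Sum>j\<in>UNIV. P i j * g j) + q i * a i
         - \<beta> * (q i * (a i - m)^2) - q i * (b i - \<beta> * (b i - m)^2)" for i
    proof -
      have "(\<Sum>j\<in>UNIV. (P' i j - P i j) * g j) = (\<Sum>j\<in>UNIV. P' i j * g j) - (\<Sum>j\<in>UNIV. P i j * g j)"
        by (simp add: left_diff_distrib sum_subtractf)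
      then show ?thesis by (simp add: ring_distribs)
    qed
    show ?thesis
      by (simp only: pw sum.distrib sum_subtractf sum_distrib_left[symmetric])
  qed
  have sq: "(\<Sum>i\<in>UNIV. q i * (a i - m)^2) = (\<Sum>i\<in>UNIV. q i * (a i - m1)^2) + (m1 - m)^2"
  proof -
    have e: "\<And>i. q i * (a i - m)^2 = q i * (a i - m1)^2 + 2 * (m1 - m) * (q i * a i) + (m^2 - m1^2) * q i"
      by (simp add: power2_eq_square algebra_simps)
    show ?thesis
      by (simp add: e sum.distrib sum_distrib_left[symmetric] q1 m1_def[symmetric]) (simp add: power2_eq_square algebra_simps)
  qed
  have main: "(m1 - \<beta> * (\<Sum>i\<in>UNIV. q i * (a i - m1)^2)) - J =
     (\<Sum>i\<in>UNIV. q i * ((\<Sum>j\<in>UNIV. (P' i j - P i j) * g j)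
         + a i - \<beta> * (a i - m)^2 - b i + \<beta> * (b i - m)^2))
     + \<beta> * (m1 - m)^2"
    unfolding split t1 t2 sq m1_def[symmetric] by (simp add: algebra_simps)
  show ?thesis using main
    by (simp only: q_def P_def P'_def m_def J_def a_def b_def Jd' m' m1_def)
qed
end
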